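(* Let $\Omega\subset\mathbb{R}^N$ be a nonempty open set, $X=\overline{\Omega}$, $Y\subset\mathbb{R}^N$, $x_0\in\Omega$ and $u:X\to Y$. If $u$ is differentiable at $x_0$ and $r_u(x_0)=2$, then $\nabla u(x_0)\in O(N)$.
   Context: $O(N)$ is the set of orthogonal $N\times N$ matrices. $e_u(x_0)=\limsup_{x\to x_0,\,x\ne x_0}\frac{|u(x)-u(x_0)|}{|x-x_0|}$, $c_u(x_0)=\limsup_{x\to x_0,\,x\ne x_0}\frac{|x-x_0|}{|u(x)-u(x_0)|}$ (quotient $+\infty$ if $u(x)=u(x_0)$), and $r_u(x_0)=e_u(x_0)+c_u(x_0)$. *)

theory Defs
  imports "HOL-Analysis.Analysis"
begin

definition e_u :: "'a set \<Rightarrow> ('a::real_normed_vector \<Rightarrow> 'b::real_normed_vector) \<Rightarrow> 'a \<Rightarrow> ereal" where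
  "e_u X u x0 = Limsup (at x0 within X) (\<lambda>x. ereal (norm (u x - u x0) / norm (x - x0)))"

definition c_u :: "'a set \<Rightarrow> ('a::real_normed_vector \<Rightarrow> 'b::real_normed_vector) \<Rightarrow> 'a \<Rightarrow> ereal" where
  "c_u X u x0 = Limsup (at x0 within X)
     (\<lambda>x. if u x = u x0 then \<infinity> else ereal (norm (x - x0) / norm (u x - u x0)))"

definition r_u :: "'a set \<Rightarrow> ('a::real_normed_vector \<Rightarrow> 'b::real_normed_vector) \<Rightarrow> 'a \<Rightarrow> ereal" where
  "r_u X u x0 = e_u X u x0 + c_u X u x0"

end

theory Submission
  imports Defs
begin

lemma Limsup_filter_mono:
  assumes "F1 \<le> F2"
  shows "Limsup F1 (f::'a \<Rightarrow> 'b::complete_lattice) \<le> Limsup F2 f"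
  unfolding Limsup_def
  by (rule INF_superset_mono) (auto intro: filter_leD[OF assms])

lemma dir_limit:
  fixes u :: "'a::real_normed_vector \<Rightarrow> 'b::real_normed_vector"
  assumes D: "(u has_derivative L) (at x0)" and v: "norm v = 1"
  shows "((\<lambda>t. norm (u (x0 + t *\<^sub>R v) - u x0) / norm ((x0 + t *\<^sub>R v) - x0)) \<longlongrightarrow> norm (L v)) (at_right 0)"
proof -
  have lin: "linear L" using D has_derivative_linear by blast
  from D have E: "((\<lambda>h. norm (u (x0 + h) - u x0 - L h) / norm h) \<longlongrightarrow> 0) (at 0)"
    by (simp add: has_derivative_at)
  have fl: "filterlim (\<lambda>t. t *\<^sub>R v) (at 0) (at_right (0::real))"
    unfolding filterlim_at
  proof
    show "\<forall>\<^sub>F x in at_right 0. x *\<^sub>R v \<in> UNIV \<and> x *\<^sub>R v \<noteq> 0"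
      using eventually_at_right_less[of 0] by (rule eventually_mono) (use v in auto)
    have "((\<lambda>t. t *\<^sub>R v) \<longlongrightarrow> 0 *\<^sub>R v) (at_right (0::real))"
      by (intro tendsto_intros)
    then show "((\<lambda>t. t *\<^sub>R v) \<longlongrightarrow> 0) (at_right (0::real))" by simp
  qed
  have E2: "((\<lambda>t. norm (u (x0 + t *\<^sub>R v) - u x0 - L (t *\<^sub>R v)) / norm (t *\<^sub>R v)) \<longlongrightarrow> 0) (at_right 0)"
    using filterlim_compose[OF E fl] by (simp add: o_def)
  have "((\<lambda>t. norm (u (x0 + t *\<^sub>R v) - u x0) / norm ((x0 + t *\<^sub>R v) - x0) - norm (L v)) \<longlongrightarrow> 0) (at_right 0)"
  proof (rule Lim_null_comparison[OF _ E2])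
    show "\<forall>\<^sub>F t in at_right 0. norm (norm (u (x0 + t *\<^sub>R v) - u x0) / norm ((x0 + t *\<^sub>R v) - x0) - norm (L v))
        \<le> norm (u (x0 + t *\<^sub>R v) - u x0 - L (t *\<^sub>R v)) / norm (t *\<^sub>R v)"
      using eventually_at_right_less[of 0]
    proof (rule eventually_mono)
      fix t :: real assume t: "0 < t"
      let ?a = "u (x0 + t *\<^sub>R v) - u x0"
      have Lt: "L (t *\<^sub>R v) = t *\<^sub>R L v" using lin by (simp add: linear_scale)
      have nt: "norm (t *\<^sub>R v) = t" using t v by simp
      have eq: "norm ?a / t - norm (L v) = (norm ?a - norm (t *\<^sub>R L v)) / t"
        using t by (simp add: field_simps)
      have ineq: "\<bar>norm ?a - norm (t *\<^sub>R L v)\<bar> \<le> norm (?a - t *\<^sub>R L v)"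
        by (rule norm_triangle_ineq3)
      have "\<bar>norm ?a / t - norm (L v)\<bar> = \<bar>norm ?a - norm (t *\<^sub>R L v)\<bar> / t"
        unfolding eq using t by (simp add: abs_divide)
      also have "\<dots> \<le> norm (?a - t *\<^sub>R L v) / t"
        by (rule divide_right_mono[OF ineq]) (use t in simp)
      finally have fin: "\<bar>norm ?a / t - norm (L v)\<bar> \<le> norm (?a - t *\<^sub>R L v) / t" .
      have e1: "norm ((x0 + t *\<^sub>R v) - x0) = t" using nt by simp
      show "norm (norm ?a / norm ((x0 + t *\<^sub>R v) - x0) - norm (L v))
        \<le> norm (?a - L (t *\<^sub>R v)) / norm (t *\<^sub>R v)"
        unfolding e1 nt Lt real_norm_def by (rule fin)
    qed
  qed
  then show ?thesis by (rule iffD2[OF Lim_null])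
qed

theorem lemma3p7:
  fixes \<Omega> Y :: "(real ^ 'n) set" and u :: "real ^ 'n \<Rightarrow> real ^ 'n" and x0 :: "real ^ 'n"
  assumes "open \<Omega>" and "\<Omega> \<noteq> {}"
    and "x0 \<in> \<Omega>"
    and "u ` closure \<Omega> \<subseteq> Y"
    and "u differentiable (at x0)"
    and "r_u (closure \<Omega>) u x0 = 2"
  shows "orthogonal_matrix (matrix (frechet_derivative u (at x0)))"
proof -
  define L where "L = frechet_derivative u (at x0)"
  have D: "(u has_derivative L) (at x0)"
    using assms(5) frechet_derivative_works L_def by blast
  have lin: "linear L" using D has_derivative_linear by blast
  obtain r where r: "r > 0" "ball x0 r \<subseteq> \<Omega>" using assms(1,3) open_contains_ball by blast
  have unit: "norm (L v) = 1" if v: "norm v = 1" for v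
  proof -
    define g where "g = (\<lambda>t::real. x0 + t *\<^sub>R v)"
    define q where "q = (\<lambda>t. norm (u (g t) - u x0) / norm (g t - x0))"
    have qlim: "(q \<longlongrightarrow> norm (L v)) (at_right 0)"
      using dir_limit[OF D v] by (simp add: q_def g_def)
    have q0: "q t \<ge> 0" for t by (simp add: q_def)
    have fl: "filterlim g (at x0 within closure \<Omega>) (at_right 0)"
      unfolding filterlim_at
    proof
      show "\<forall>\<^sub>F t in at_right 0. g t \<in> closure \<Omega> \<and> g t \<noteq> x0"
      proof -
        have "\<forall>\<^sub>F t in at_right 0. 0 < t \<and> t < r"
          unfolding eventually_at_right_field using r(1) by (intro exI[of _ r]) auto
        then show ?thesis
        proof (rule eventually_mono)
          fix t assume t: "0 < t \<and> t < r"
          have "g t \<in> ball x0 r" using t v by (simp add: g_def dist_norm)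
          then have "g t \<in> closure \<Omega>" using r(2) closure_subset by blast
          moreover have "g t \<noteq> x0" using t v by (auto simp: g_def)
          ultimately show "g t \<in> closure \<Omega> \<and> g t \<noteq> x0" by blast
        qed
      qed
      have "(g \<longlongrightarrow> x0 + 0 *\<^sub>R v) (at_right 0)" unfolding g_def by (intro tendsto_intros)
      then show "(g \<longlongrightarrow> x0) (at_right 0)" by simp
    qed
    have le: "filtermap g (at_right 0) \<le> at x0 within closure \<Omega>"
      using fl by (simp add: filterlim_def)
    have nb: "\<not> trivial_limit (at_right (0::real))" by simp
    have e_ge: "ereal (norm (L v)) \<le> e_u (closure \<Omega>) u x0"
    proof -
      have "Limsup (at_right 0) (\<lambda>t. ereal (q t)) = ereal (norm (L v))"
        by (rule lim_imp_Limsup[OF nb]) (simp add: qlim)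
      moreover have "Limsup (at_right 0) (\<lambda>t. ereal (q t)) \<le>
          Limsup (filtermap g (at_right 0)) (\<lambda>x. ereal (norm (u x - u x0) / norm (x - x0)))"
        using Limsup_filtermap_ge[where f=g and F="at_right 0" and g="\<lambda>x. ereal (norm (u x - u x0) / norm (x - x0))"]
        by (simp add: q_def)
      moreover have "Limsup (filtermap g (at_right 0)) (\<lambda>x. ereal (norm (u x - u x0) / norm (x - x0)))
          \<le> e_u (closure \<Omega>) u x0"
        unfolding e_u_def by (rule Limsup_filter_mono[OF le])
      ultimately show ?thesis by simp
    qed
    have c_ge: "inverse (ereal (norm (L v))) \<le> c_u (closure \<Omega>) u x0"
    proof -
      let ?h = "\<lambda>x. if u x = u x0 then \<infinity> else ereal (norm (x - x0) / norm (u x - u x0))"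
      have eq: "\<forall>\<^sub>F t in at_right 0. inverse (ereal (q t)) = ?h (g t)"
        using eventually_at_right_less[of 0]
      proof (rule eventually_mono)
        fix t :: real assume t: "0 < t"
        have gx: "g t - x0 \<noteq> 0" using t v by (auto simp: g_def)
        show "inverse (ereal (q t)) = ?h (g t)"
        proof (cases "u (g t) = u x0")
          case True then show ?thesis by (simp add: q_def)
        next
          case False
          then have "q t \<noteq> 0" using gx by (simp add: q_def)
          then show ?thesis using False by (simp add: q_def inverse_eq_divide)
        qed
      qed
      have "((\<lambda>t. inverse (ereal (q t))) \<longlongrightarrow> inverse (ereal (norm (L v)))) (at_right 0)"
        by (rule Extended_Real.tendsto_inverse_ereal) (simp_all add: qlim q0)
      then have "Limsup (at_right 0) (\<lambda>t. inverse (ereal (q t))) = inverse (ereal (norm (L v)))"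
        by (rule lim_imp_Limsup[OF nb])
      moreover have "Limsup (at_right 0) (\<lambda>t. inverse (ereal (q t))) = Limsup (at_right 0) (\<lambda>t. ?h (g t))"
        by (rule Limsup_eq[OF eq])
      moreover have "Limsup (at_right 0) (\<lambda>t. ?h (g t)) \<le> Limsup (filtermap g (at_right 0)) ?h"
        by (rule Limsup_filtermap_ge)
      moreover have "Limsup (filtermap g (at_right 0)) ?h \<le> c_u (closure \<Omega>) u x0"
        unfolding c_u_def by (rule Limsup_filter_mono[OF le])
      ultimately show ?thesis by simp
    qed
    have sum: "ereal (norm (L v)) + inverse (ereal (norm (L v))) \<le> 2"
      using add_mono[OF e_ge c_ge] assms(6) by (simp add: r_u_def)
    define a where "a = norm (L v)"
    have a0: "a \<ge> 0" by (simp add: a_def)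
    show ?thesis
    proof (cases "a = 0")
      case True then show ?thesis using sum by (simp add: a_def)
    next
      case False
      then have ap: "a > 0" using a0 by simp
      have "ereal (a + 1 / a) \<le> 2" using sum ap by (simp add: a_def inverse_eq_divide)
      then have s: "a + 1 / a \<le> 2" by simp
      have "a * a + 1 \<le> 2 * a" using s ap by (simp add: field_simps)
      then have "(a - 1)^2 \<le> 0" by (simp add: power2_eq_square algebra_simps)
      then have "a = 1" by (metis power2_less_eq_zero_iff right_minus_eq)
      then show ?thesis by (simp add: a_def)
    qed
  qed
  have iso: "norm (L w) = norm w" for w
  proof (cases "w = 0")
    case True then show ?thesis using lin linear_0 by auto
  next
    case False
    have "L w = norm w *\<^sub>R L (w /\<^sub>R norm w)"
      using False lin by (simp add: linear_scale)
    moreover have "norm (L (w /\<^sub>R norm w)) = 1" using False by (intro unit) simp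
    ultimately show ?thesis by simp
  qed
  have "orthogonal_transformation L"
    unfolding orthogonal_transformation_isometry
    using lin iso by (simp add: linear_0 dist_norm linear_diff[symmetric])
  then show ?thesis using orthogonal_transformation_matrix L_def by blast
qed

end
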